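(* Assume (A1)–(A3) below. For any positive definite $L\times L$ matrix $W$, the GMM estimator $\hat\beta_W$ satisfies $\hat\beta_W\xrightarrow{p}\beta^*(W)$, where $$\beta^*(W)=\sum_{\ell=1}^L\lambda_\ell(W)\,\mathrm{Wald}_\ell,\qquad \lambda_\ell(W)=\frac{\gamma_\ell\,[W\boldsymbol\gamma]_\ell}{\boldsymbol\gamma'W\boldsymbol\gamma},$$ and $\sum_{\ell=1}^L\lambda_\ell(W)=1$.
   Context: We observe an i.i.d. sample $\{(Y_i,D_i,Z_{1i},\dots,Z_{Li})\}_{i=1}^n$ with $Y_i\in\mathbb R$, $D_i\in\{0,1\}$, $Z_{\ell i}\in\{0,1\}$, $L\ge2$; $\mathbf Z_i=(Z_{1i},\dots,Z_{Li})'$. Units have potential outcomes $Y_i(0),Y_i(1)$ and a compliance type $D_i(\cdot):\{0,1\}^L\to\{0,1\}$, with $D_i=D_i(\mathbf Z_i)$, $Y_i=D_iY_i(1)+(1-D_i)Y_i(0)$. $p_\ell=P(Z_{\ell i}=1)$, $\pi_\ell=\mathbb E[D_i\mid Z_{\ell i}=1]-\mathbb E[D_i\mid Z_{\ell i}=0]$, $\rho_\ell=\mathbb E[Y_i\mid Z_{\ell i}=1]-\mathbb E[Y_i\mid Z_{\ell i}=0]$, $\mathrm{Wald}_\ell=\rho_\ell/\pi_\ell$, $\gamma_\ell=\mathrm{Cov}(D_i,Z_{\ell i})=\pi_\ell p_\ell(1-p_\ell)$, $\boldsymbol\gamma=(\gamma_1,\dots,\gamma_L)'$, $\Sigma_Z=\mathrm{Var}(\mathbf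 Z_i)$. With $\hat p_\ell=n^{-1}\sum_iZ_{\ell i}$ and $g_{n,\ell}(\beta)=n^{-1}\sum_i(Y_i-\beta D_i)(Z_{\ell i}-\hat p_\ell)$, $g_n=(g_{n,1},\dots,g_{n,L})'$, the GMM estimator is $\hat\beta_W=\arg\min_\beta g_n(\beta)'Wg_n(\beta)$. Assumptions: (A1) $(Y_i(0),Y_i(1),D_i(\cdot))$ independent of $\mathbf Z_i$. (A2) $D_i(z)$ nondecreasing in each coordinate for every $i$. (A3) $p_\ell>0$, $\pi_\ell>0$ for all $\ell$; $\Sigma_Z$ positive definite. *)

theory Defs
  imports "HOL-Probability.Probability"
begin

text \<open>Instrument vectors z in {0,1}^L are encoded as predicates on nat that are
  False outside the index range 0..L-1 (coordinate l-1 of the paper is index l here).\<close>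
definition zspace :: "nat \<Rightarrow> (nat \<Rightarrow> bool) set" where
  "zspace L = {z. \<forall>l\<ge>L. \<not> z l}"

text \<open>Measurable space of one unit: ((Y(0),Y(1)), compliance type D(.), instrument vector Z).\<close>
definition unit_space ::
  "((real \<times> real) \<times> ((nat \<Rightarrow> bool) \<Rightarrow> bool) \<times> (nat \<Rightarrow> bool)) measure" where
  "unit_space = (borel \<Otimes>\<^sub>M borel) \<Otimes>\<^sub>M (count_space UNIV \<Otimes>\<^sub>M count_space UNIV)"

definition unit_var ::
  "(nat \<Rightarrow> 'a \<Rightarrow> real) \<Rightarrow> (nat \<Rightarrow> 'a \<Rightarrow> real) \<Rightarrow> (nat \<Rightarrow> 'a \<Rightarrow> (nat \<Rightarrow> bool) \<Rightarrow> bool)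
    \<Rightarrow> (nat \<Rightarrow> 'a \<Rightarrow> nat \<Rightarrow> bool) \<Rightarrow> nat \<Rightarrow> 'a
    \<Rightarrow> (real \<times> real) \<times> ((nat \<Rightarrow> bool) \<Rightarrow> bool) \<times> (nat \<Rightarrow> bool)" where
  "unit_var Y0 Y1 Dt Z i \<omega> = ((Y0 i \<omega>, Y1 i \<omega>), Dt i \<omega>, Z i \<omega>)"

definition Dobs :: "(nat \<Rightarrow> 'a \<Rightarrow> (nat \<Rightarrow> bool) \<Rightarrow> bool) \<Rightarrow> (nat \<Rightarrow> 'a \<Rightarrow> nat \<Rightarrow> bool)
    \<Rightarrow> nat \<Rightarrow> 'a \<Rightarrow> real" where
  "Dobs Dt Z i \<omega> = (if Dt i \<omega> (Z i \<omega>) then 1 else 0)"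

definition Yobs :: "(nat \<Rightarrow> 'a \<Rightarrow> real) \<Rightarrow> (nat \<Rightarrow> 'a \<Rightarrow> real)
    \<Rightarrow> (nat \<Rightarrow> 'a \<Rightarrow> (nat \<Rightarrow> bool) \<Rightarrow> bool) \<Rightarrow> (nat \<Rightarrow> 'a \<Rightarrow> nat \<Rightarrow> bool)
    \<Rightarrow> nat \<Rightarrow> 'a \<Rightarrow> real" where
  "Yobs Y0 Y1 Dt Z i \<omega> = Dobs Dt Z i \<omega> * Y1 i \<omega> + (1 - Dobs Dt Z i \<omega>) * Y0 i \<omega>"

definition Zobs :: "(nat \<Rightarrow> 'a \<Rightarrow> nat \<Rightarrow> bool) \<Rightarrow> nat \<Rightarrow> 'a \<Rightarrow> nat \<Rightarrow> real" where
  "Zobs Z i \<omega> l = (if Z i \<omega> l then 1 else 0)"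

definition cond_mean :: "'a measure \<Rightarrow> ('a \<Rightarrow> real) \<Rightarrow> 'a set \<Rightarrow> real" where
  "cond_mean M X A = (\<integral>\<omega>. indicator A \<omega> * X \<omega> \<partial>M) / measure M A"

definition pZ :: "'a measure \<Rightarrow> ('a \<Rightarrow> nat \<Rightarrow> real) \<Rightarrow> nat \<Rightarrow> real" where
  "pZ M Zv l = measure M {\<omega> \<in> space M. Zv \<omega> l = 1}"

definition diffZ :: "'a measure \<Rightarrow> ('a \<Rightarrow> real) \<Rightarrow> ('a \<Rightarrow> nat \<Rightarrow> real) \<Rightarrow> nat \<Rightarrow> real" where
  "diffZ M X Zv l = cond_mean M X {\<omega> \<in> space M. Zv \<omega> l = 1}
                   - cond_mean M X {\<omega> \<in> space M. Zv \<omega> l = 0}"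

definition piZ :: "'a measure \<Rightarrow> ('a \<Rightarrow> real) \<Rightarrow> ('a \<Rightarrow> nat \<Rightarrow> real) \<Rightarrow> nat \<Rightarrow> real" where
  "piZ M D Zv l = diffZ M D Zv l"

definition rhoZ :: "'a measure \<Rightarrow> ('a \<Rightarrow> real) \<Rightarrow> ('a \<Rightarrow> nat \<Rightarrow> real) \<Rightarrow> nat \<Rightarrow> real" where
  "rhoZ M Y Zv l = diffZ M Y Zv l"

definition wald :: "'a measure \<Rightarrow> ('a \<Rightarrow> real) \<Rightarrow> ('a \<Rightarrow> real) \<Rightarrow> ('a \<Rightarrow> nat \<Rightarrow> real) \<Rightarrow> nat \<Rightarrow> real" where
  "wald M Y D Zv l = rhoZ M Y Zv l / piZ M D Zv l"

definition gammaZ :: "'a measure \<Rightarrow> ('a \<Rightarrow> real) \<Rightarrow> ('a \<Rightarrow> nat \<Rightarrow> real) \<Rightarrow> nat \<Rightarrow> real" where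
  "gammaZ M D Zv l = piZ M D Zv l * pZ M Zv l * (1 - pZ M Zv l)"

definition covZ :: "'a measure \<Rightarrow> ('a \<Rightarrow> nat \<Rightarrow> real) \<Rightarrow> nat \<Rightarrow> nat \<Rightarrow> real" where
  "covZ M Zv l m = (\<integral>\<omega>. Zv \<omega> l * Zv \<omega> m \<partial>M) - (\<integral>\<omega>. Zv \<omega> l \<partial>M) * (\<integral>\<omega>. Zv \<omega> m \<partial>M)"

definition posdef :: "nat \<Rightarrow> (nat \<Rightarrow> nat \<Rightarrow> real) \<Rightarrow> bool" where
  "posdef L W \<longleftrightarrow> (\<forall>l<L. \<forall>m<L. W l m = W m l) \<and>
     (\<forall>x::nat \<Rightarrow> real. (\<exists>l<L. x l \<noteq> 0) \<longrightarrow> 0 < (\<Sum>l<L. \<Sum>m<L. x l * W l m * x m))"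

definition lam :: "nat \<Rightarrow> (nat \<Rightarrow> nat \<Rightarrow> real) \<Rightarrow> (nat \<Rightarrow> real) \<Rightarrow> nat \<Rightarrow> real" where
  "lam L W g l = g l * (\<Sum>m<L. W l m * g m) / (\<Sum>k<L. \<Sum>m<L. g k * W k m * g m)"

definition beta_star :: "nat \<Rightarrow> (nat \<Rightarrow> nat \<Rightarrow> real) \<Rightarrow> (nat \<Rightarrow> real) \<Rightarrow> (nat \<Rightarrow> real) \<Rightarrow> real" where
  "beta_star L W g wd = (\<Sum>l<L. lam L W g l * wd l)"

definition phat :: "(nat \<Rightarrow> 'a \<Rightarrow> nat \<Rightarrow> real) \<Rightarrow> nat \<Rightarrow> 'a \<Rightarrow> nat \<Rightarrow> real" where
  "phat Zv n \<omega> l = (\<Sum>i<n. Zv i \<omega> l) / real n"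

definition gn :: "(nat \<Rightarrow> 'a \<Rightarrow> real) \<Rightarrow> (nat \<Rightarrow> 'a \<Rightarrow> real) \<Rightarrow> (nat \<Rightarrow> 'a \<Rightarrow> nat \<Rightarrow> real)
    \<Rightarrow> nat \<Rightarrow> 'a \<Rightarrow> real \<Rightarrow> nat \<Rightarrow> real" where
  "gn Y D Zv n \<omega> \<beta> l = (\<Sum>i<n. (Y i \<omega> - \<beta> * D i \<omega>) * (Zv i \<omega> l - phat Zv n \<omega> l)) / real n"

definition gmm_obj :: "nat \<Rightarrow> (nat \<Rightarrow> nat \<Rightarrow> real) \<Rightarrow> (nat \<Rightarrow> 'a \<Rightarrow> real) \<Rightarrow> (nat \<Rightarrow> 'a \<Rightarrow> real)
    \<Rightarrow> (nat \<Rightarrow> 'a \<Rightarrow> nat \<Rightarrow> real) \<Rightarrow> nat \<Rightarrow> 'a \<Rightarrow> real \<Rightarrow> real" where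
  "gmm_obj L W Y D Zv n \<omega> \<beta> =
     (\<Sum>l<L. \<Sum>m<L. gn Y D Zv n \<omega> \<beta> l * W l m * gn Y D Zv n \<omega> \<beta> m)"

definition gmm_est :: "nat \<Rightarrow> (nat \<Rightarrow> nat \<Rightarrow> real) \<Rightarrow> (nat \<Rightarrow> 'a \<Rightarrow> real) \<Rightarrow> (nat \<Rightarrow> 'a \<Rightarrow> real)
    \<Rightarrow> (nat \<Rightarrow> 'a \<Rightarrow> nat \<Rightarrow> real) \<Rightarrow> nat \<Rightarrow> 'a \<Rightarrow> real" where
  "gmm_est L W Y D Zv n \<omega> = (SOME \<beta>. is_arg_min (gmm_obj L W Y D Zv n \<omega>) (\<lambda>_. True) \<beta>)"

text \<open>Independence of two random elements with (possibly different) value spaces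
  (textbook definition via events; the library's indep_var requires equal value types).\<close>
definition indep_rv :: "'a measure \<Rightarrow> 'b measure \<Rightarrow> ('a \<Rightarrow> 'b) \<Rightarrow> 'c measure \<Rightarrow> ('a \<Rightarrow> 'c) \<Rightarrow> bool" where
  "indep_rv M N1 X N2 Y \<longleftrightarrow> X \<in> measurable M N1 \<and> Y \<in> measurable M N2 \<and>
     (\<forall>A\<in>sets N1. \<forall>B\<in>sets N2.
        measure M (X -` A \<inter> Y -` B \<inter> space M) = measure M (X -` A \<inter> space M) * measure M (Y -` B \<inter> space M))"

definition conv_in_prob :: "'a measure \<Rightarrow> (nat \<Rightarrow> 'a \<Rightarrow> real) \<Rightarrow> real \<Rightarrow> bool" where
  "conv_in_prob M X c \<longleftrightarrow> (\<forall>n. X n \<in> borel_measurable M) \<and>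
     (\<forall>e>0. (\<lambda>n. measure M {\<omega> \<in> space M. \<bar>X n \<omega> - c\<bar> > e}) \<longlonglongrightarrow> 0)"

end

theory Submission
  imports Defs
begin



lemma conv_const:
  assumes "prob_space M"
  shows "conv_in_prob M (\<lambda>n \<omega>. k) k"
  unfolding conv_in_prob_def by auto

lemma conv2:
  fixes X Y :: "nat \<Rightarrow> 'a \<Rightarrow> real" and F :: "real \<Rightarrow> real \<Rightarrow> real"
  assumes P: "prob_space M"
    and cx: "conv_in_prob M X c" and cy: "conv_in_prob M Y d"
    and cont: "isCont (\<lambda>p. F (fst p) (snd p)) (c, d)"
    and meas: "\<And>n. (\<lambda>\<omega>. F (X n \<omega>) (Y n \<omega>)) \<in> borel_measurable M"
  shows "conv_in_prob M (\<lambda>n \<omega>. F (X n \<omega>) (Y n \<omega>)) (F c d)"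
proof -
  interpret prob_space M by (rule P)
  have mx[measurable]: "\<And>n. X n \<in> borel_measurable M" and my[measurable]: "\<And>n. Y n \<in> borel_measurable M"
    using cx cy unfolding conv_in_prob_def by auto
  have "(\<lambda>n. measure M {\<omega> \<in> space M. \<bar>F (X n \<omega>) (Y n \<omega>) - F c d\<bar> > e}) \<longlonglongrightarrow> 0"
    if e: "e > 0" for e
  proof -
    from cont[unfolded continuous_at_eps_delta, rule_format, OF e] obtain r where r: "r > 0" and
      rr0: "\<forall>p. dist p (c, d) < r \<longrightarrow> dist (F (fst p) (snd p)) (F c d) < e"
      by auto
    have rr: "dist (F (fst p) (snd p)) (F c d) < e" if "dist p (c, d) < r" for p
      using rr0 that by blast
    have sub: "{\<omega> \<in> space M. \<bar>F (X n \<omega>) (Y n \<omega>) - F c d\<bar> > e} \<subseteq>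
        {\<omega> \<in> space M. \<bar>X n \<omega> - c\<bar> > r/2} \<union> {\<omega> \<in> space M. \<bar>Y n \<omega> - d\<bar> > r/2}" for n
    proof safe
      fix \<omega> assume w: "\<omega> \<in> space M" "e < \<bar>F (X n \<omega>) (Y n \<omega>) - F c d\<bar>"
        "\<not> r / 2 < \<bar>Y n \<omega> - d\<bar>"
      show "r / 2 < \<bar>X n \<omega> - c\<bar>"
      proof (rule ccontr)
        assume "\<not> r / 2 < \<bar>X n \<omega> - c\<bar>"
        then have h1: "(X n \<omega> - c)\<^sup>2 \<le> (r/2)\<^sup>2"
          using power_mono[of "\<bar>X n \<omega> - c\<bar>" "r/2" 2] by simp
        have h2: "(Y n \<omega> - d)\<^sup>2 \<le> (r/2)\<^sup>2"
          using power_mono[of "\<bar>Y n \<omega> - d\<bar>" "r/2" 2] w(3) by simp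
        have "(r/2)\<^sup>2 = r\<^sup>2 / 4" by (simp add: power_divide)
        moreover have "0 < r\<^sup>2" using r by simp
        ultimately have "(X n \<omega> - c)\<^sup>2 + (Y n \<omega> - d)\<^sup>2 < r\<^sup>2" using h1 h2 by linarith
        then have "sqrt ((X n \<omega> - c)\<^sup>2 + (Y n \<omega> - d)\<^sup>2) < sqrt (r\<^sup>2)"
          by (rule real_sqrt_less_mono)
        then have "dist (X n \<omega>, Y n \<omega>) (c, d) < r"
          using r unfolding dist_Pair_Pair dist_real_def by simp
        from rr[OF this] w(2) show False by (simp add: dist_real_def)
      qed
    qed
    have le: "measure M {\<omega> \<in> space M. \<bar>F (X n \<omega>) (Y n \<omega>) - F c d\<bar> > e} \<le>
        measure M {\<omega> \<in> space M. \<bar>X n \<omega> - c\<bar> > r/2} + measure M {\<omega> \<in> space M. \<bar>Y n \<omega> - d\<bar> > r/2}" for n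
    proof -
      have "measure M {\<omega> \<in> space M. \<bar>F (X n \<omega>) (Y n \<omega>) - F c d\<bar> > e} \<le>
        measure M ({\<omega> \<in> space M. \<bar>X n \<omega> - c\<bar> > r/2} \<union> {\<omega> \<in> space M. \<bar>Y n \<omega> - d\<bar> > r/2})"
        by (intro finite_measure_mono sub) measurable
      also have "\<dots> \<le> measure M {\<omega> \<in> space M. \<bar>X n \<omega> - c\<bar> > r/2} + measure M {\<omega> \<in> space M. \<bar>Y n \<omega> - d\<bar> > r/2}"
        by (intro measure_Un_le) measurable
      finally show ?thesis .
    qed
    have "(\<lambda>n. measure M {\<omega> \<in> space M. \<bar>X n \<omega> - c\<bar> > r/2} + measure M {\<omega> \<in> space M. \<bar>Y n \<omega> - d\<bar> > r/2}) \<longlonglongrightarrow> 0 + 0"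
    proof (rule tendsto_add)
      have r2: "0 < r/2" using r by simp
      show "(\<lambda>n. measure M {\<omega> \<in> space M. \<bar>X n \<omega> - c\<bar> > r/2}) \<longlonglongrightarrow> 0"
        using conjunct2[OF cx[unfolded conv_in_prob_def], rule_format, OF r2] .
      show "(\<lambda>n. measure M {\<omega> \<in> space M. \<bar>Y n \<omega> - d\<bar> > r/2}) \<longlonglongrightarrow> 0"
        using conjunct2[OF cy[unfolded conv_in_prob_def], rule_format, OF r2] .
    qed
    then have lim: "(\<lambda>n. measure M {\<omega> \<in> space M. \<bar>X n \<omega> - c\<bar> > r/2} + measure M {\<omega> \<in> space M. \<bar>Y n \<omega> - d\<bar> > r/2}) \<longlonglongrightarrow> 0"
      by simp
    show ?thesis
    proof (rule tendsto_sandwich[OF _ _ tendsto_const lim])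
      show "\<forall>\<^sub>F n in sequentially. 0 \<le> measure M {\<omega> \<in> space M. e < \<bar>F (X n \<omega>) (Y n \<omega>) - F c d\<bar>}"
        by (rule always_eventually) simp
      show "\<forall>\<^sub>F n in sequentially. measure M {\<omega> \<in> space M. e < \<bar>F (X n \<omega>) (Y n \<omega>) - F c d\<bar>} \<le>
          measure M {\<omega> \<in> space M. \<bar>X n \<omega> - c\<bar> > r/2} + measure M {\<omega> \<in> space M. \<bar>Y n \<omega> - d\<bar> > r/2}"
        by (rule always_eventually) (use le in blast)
    qed
  qed
  then show ?thesis using meas unfolding conv_in_prob_def by auto
qed

lemma conv_sum:
  fixes X :: "'i \<Rightarrow> nat \<Rightarrow> 'a \<Rightarrow> real"
  assumes P: "prob_space M" and S: "finite S"
    and c: "\<And>k. k \<in> S \<Longrightarrow> conv_in_prob M (X k) (c k)"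
  shows "conv_in_prob M (\<lambda>n \<omega>. \<Sum>k\<in>S. X k n \<omega>) (\<Sum>k\<in>S. c k)"
  using S c
proof (induction S rule: finite_induct)
  case empty then show ?case using conv_const[OF P, of 0] by simp
next
  case (insert x F)
  have a: "conv_in_prob M (X x) (c x)" using insert by auto
  have b: "conv_in_prob M (\<lambda>n \<omega>. \<Sum>k\<in>F. X k n \<omega>) (\<Sum>k\<in>F. c k)" using insert by auto
  have "conv_in_prob M (\<lambda>n \<omega>. (\<lambda>u v. u + v) (X x n \<omega>) (\<Sum>k\<in>F. X k n \<omega>)) ((\<lambda>u v. u + v) (c x) (\<Sum>k\<in>F. c k))"
    apply (rule conv2[OF P a b])
     apply (intro continuous_intros)
    using a b unfolding conv_in_prob_def by (intro borel_measurable_add) auto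
  then show ?case using insert by simp
qed


lemma conv_mult:
  assumes P: "prob_space M" and a: "conv_in_prob M X c" and b: "conv_in_prob M Y d"
  shows "conv_in_prob M (\<lambda>n \<omega>. X n \<omega> * Y n \<omega>) (c * d)"
proof -
  have "conv_in_prob M (\<lambda>n \<omega>. (\<lambda>u v. u * v) (X n \<omega>) (Y n \<omega>)) ((\<lambda>u v. u * v) c d)"
    apply (rule conv2[OF P a b])
     apply (intro continuous_intros)
    using a b unfolding conv_in_prob_def by (intro borel_measurable_times) auto
  then show ?thesis by simp
qed

lemma conv_diff:
  assumes P: "prob_space M" and a: "conv_in_prob M X c" and b: "conv_in_prob M Y d"
  shows "conv_in_prob M (\<lambda>n \<omega>. X n \<omega> - Y n \<omega>) (c - d)"
proof -
  have "conv_in_prob M (\<lambda>n \<omega>. (\<lambda>u v. u - v) (X n \<omega>) (Y n \<omega>)) ((\<lambda>u v. u - v) c d)"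
    apply (rule conv2[OF P a b])
     apply (intro continuous_intros)
    using a b unfolding conv_in_prob_def by (intro borel_measurable_diff) auto
  then show ?thesis by simp
qed

lemma conv_wmult:
  assumes P: "prob_space M" and a: "conv_in_prob M X c" and b: "conv_in_prob M Y d"
  shows "conv_in_prob M (\<lambda>n \<omega>. X n \<omega> * k * Y n \<omega>) (c * k * d)"
proof -
  have "conv_in_prob M (\<lambda>n \<omega>. (\<lambda>u v. u * k * v) (X n \<omega>) (Y n \<omega>)) ((\<lambda>u v. u * k * v) c d)"
    apply (rule conv2[OF P a b])
     apply (intro continuous_intros)
    using a b unfolding conv_in_prob_def by (intro borel_measurable_times borel_measurable_const) auto
  then show ?thesis by simp
qed

lemma conv_div_if:
  assumes P: "prob_space M" and a: "conv_in_prob M X c" and b: "conv_in_prob M Y d" and d: "0 < d"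
  shows "conv_in_prob M (\<lambda>n \<omega>. if 0 < Y n \<omega> then X n \<omega> / Y n \<omega> else c0) (c / d)"
proof -
  have "eventually (\<lambda>p. p \<in> {p :: real \<times> real. 0 < snd p}) (nhds (c, d))"
  proof (rule eventually_nhds_in_open)
    show "open {p :: real \<times> real. 0 < snd p}"
      by (intro open_Collect_less continuous_intros)
  qed (use d in auto)
  then have ev: "eventually (\<lambda>p. (\<lambda>p. if 0 < snd p then fst p / snd p else c0) p = (\<lambda>p. fst p / snd p) p) (nhds (c, d))"
    by (rule eventually_mono) auto
  have ic: "isCont (\<lambda>p. fst p / snd p) (c, d)"
    using d by (intro continuous_intros) auto
  have "conv_in_prob M (\<lambda>n \<omega>. (\<lambda>u v. if 0 < v then u / v else c0) (X n \<omega>) (Y n \<omega>))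
      ((\<lambda>u v. if 0 < v then u / v else c0) c d)"
  proof (rule conv2[OF P a b])
    show "isCont (\<lambda>p. (\<lambda>u v. if 0 < v then u / v else c0) (fst p) (snd p)) (c, d)"
      using isCont_cong[OF ev] ic by simp
    fix n
    have [measurable]: "X n \<in> borel_measurable M" "Y n \<in> borel_measurable M"
      using a b unfolding conv_in_prob_def by auto
    show "(\<lambda>\<omega>. (\<lambda>u v. if 0 < v then u / v else c0) (X n \<omega>) (Y n \<omega>)) \<in> borel_measurable M"
      by measurable
  qed
  then show ?thesis using d by simp
qed



lemma (in prob_space) sq_sum_indep:
  fixes W :: "nat \<Rightarrow> 'a \<Rightarrow> real"
  assumes ind: "indep_vars (\<lambda>_. borel) W UNIV"
    and bnd: "\<And>i \<omega>. \<omega> \<in> space M \<Longrightarrow> \<bar>W i \<omega>\<bar> \<le> B" and B: "0 \<le> B"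
    and z: "\<And>i. (\<integral>\<omega>. W i \<omega> \<partial>M) = 0"
  shows "integrable M (\<lambda>\<omega>. (\<Sum>i<n. W i \<omega>)\<^sup>2)"
    and "(\<integral>\<omega>. (\<Sum>i<n. W i \<omega>)\<^sup>2 \<partial>M) \<le> real n * B\<^sup>2"
proof -
  have mW[measurable]: "W i \<in> borel_measurable M" for i
    using ind unfolding indep_vars_def by auto
  have intW: "integrable M (W i)" for i
    by (rule integrable_const_bound[where B=B]) (use bnd in auto)
  have intWW: "integrable M (\<lambda>\<omega>. W i \<omega> * W j \<omega>)" for i j
  proof (rule integrable_const_bound[where B="B*B"])
    show "AE x in M. norm (W i x * W j x) \<le> B * B"
      using bnd B by (auto simp: abs_mult intro!: mult_mono)
  qed auto
  have sq: "(\<Sum>i<n. W i \<omega>)\<^sup>2 = (\<Sum>i<n. \<Sum>j<n. W i \<omega> * W j \<omega>)" for \<omega>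
    by (simp add: power2_eq_square sum_product)
  have cross: "(\<integral>\<omega>. W i \<omega> * W j \<omega> \<partial>M) = (if i = j then (\<integral>\<omega>. (W i \<omega>)\<^sup>2 \<partial>M) else 0)" for i j
  proof (cases "i = j")
    case True then show ?thesis by (simp add: power2_eq_square)
  next
    case False
    have "indep_vars (\<lambda>_. borel) W {i, j}"
      by (rule indep_vars_subset[OF ind]) auto
    then have "(\<integral>\<omega>. (\<Prod>k\<in>{i,j}. W k \<omega>) \<partial>M) = (\<Prod>k\<in>{i,j}. \<integral>\<omega>. W k \<omega> \<partial>M)"
      by (intro indep_vars_lebesgue_integral) (auto intro: intW)
    then show ?thesis using False z by simp
  qed
  show "integrable M (\<lambda>\<omega>. (\<Sum>i<n. W i \<omega>)\<^sup>2)"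
    unfolding sq by (intro Bochner_Integration.integrable_sum intWW)
  have "(\<integral>\<omega>. (\<Sum>i<n. W i \<omega>)\<^sup>2 \<partial>M) = (\<Sum>i<n. \<Sum>j<n. \<integral>\<omega>. W i \<omega> * W j \<omega> \<partial>M)"
    unfolding sq
    by (subst Bochner_Integration.integral_sum, intro Bochner_Integration.integrable_sum intWW)
       (subst Bochner_Integration.integral_sum, auto intro: intWW)
  also have "\<dots> = (\<Sum>i<n. \<integral>\<omega>. (W i \<omega>)\<^sup>2 \<partial>M)"
    unfolding cross by (simp add: sum.delta)
  also have "\<dots> \<le> (\<Sum>i<n. B\<^sup>2)"
  proof (rule sum_mono)
    fix i
    have "(\<integral>\<omega>. (W i \<omega>)\<^sup>2 \<partial>M) \<le> (\<integral>\<omega>. B\<^sup>2 \<partial>M)"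
    proof (rule integral_mono)
      show "integrable M (\<lambda>\<omega>. (W i \<omega>)\<^sup>2)" using intWW[of i i] by (simp add: power2_eq_square)
      show "(W i x)\<^sup>2 \<le> B\<^sup>2" if "x \<in> space M" for x
        using power_mono[OF bnd[OF that, of i] abs_ge_zero, of 2] by simp
    qed auto
    then show "(\<integral>\<omega>. (W i \<omega>)\<^sup>2 \<partial>M) \<le> B\<^sup>2" by (simp add: prob_space)
  qed
  finally show "(\<integral>\<omega>. (\<Sum>i<n. W i \<omega>)\<^sup>2 \<partial>M) \<le> real n * B\<^sup>2" by simp
qed

lemma (in prob_space) wlln:
  fixes X :: "nat \<Rightarrow> 'a \<Rightarrow> real"
  assumes ind: "indep_vars (\<lambda>_. borel) X UNIV"
    and ident: "\<And>i. distr M borel (X i) = distr M borel (X 0)"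
    and int0: "integrable M (X 0)"
  shows "conv_in_prob M (\<lambda>n \<omega>. (\<Sum>i<n. X i \<omega>) / real n) (\<integral>\<omega>. X 0 \<omega> \<partial>M)"
proof -
  have mX[measurable]: "X i \<in> borel_measurable M" for i
    using ind unfolding indep_vars_def by auto
  have transI: "integrable M (\<lambda>\<omega>. g (X i \<omega>))"
    if g: "g \<in> borel_measurable borel" and i0: "integrable M (\<lambda>\<omega>. g (X 0 \<omega>))" for g :: "real \<Rightarrow> real" and i
    using integrable_distr_eq[OF mX[of i] g] integrable_distr_eq[OF mX[of 0] g] ident[of i] i0 by simp
  have transE: "(\<integral>\<omega>. g (X i \<omega>) \<partial>M) = (\<integral>\<omega>. g (X 0 \<omega>) \<partial>M)"
    if g: "g \<in> borel_measurable borel" for g :: "real \<Rightarrow> real" and i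
    using integral_distr[OF mX[of i] g] integral_distr[OF mX[of 0] g] ident[of i] by simp
  define \<mu> where "\<mu> = (\<integral>\<omega>. X 0 \<omega> \<partial>M)"
  have main: "(\<lambda>n. prob {\<omega> \<in> space M. e < \<bar>(\<Sum>i<n. X i \<omega>) / real n - \<mu>\<bar>}) \<longlonglongrightarrow> 0"
    if e: "e > 0" for e
  proof (rule LIMSEQ_I)
    fix r :: real assume r: "0 < r"
    define t0 where "t0 = min (e/3) (r*e/6)"
    have t0: "0 < t0" "t0 \<le> e/3" "t0 * 3 / e \<le> r/2"
      using e r by (auto simp: t0_def field_simps)
    have "(\<lambda>k. \<integral>\<omega>. (if real k < \<bar>X 0 \<omega>\<bar> then \<bar>X 0 \<omega>\<bar> else 0) \<partial>M) \<longlonglongrightarrow> (\<integral>\<omega>. 0 \<partial>M)"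
    proof (rule integral_dominated_convergence[where w="\<lambda>\<omega>. \<bar>X 0 \<omega>\<bar>"])
      show "integrable M (\<lambda>\<omega>. \<bar>X 0 \<omega>\<bar>)" using int0 by auto
      show "AE x in M. (\<lambda>k. if real k < \<bar>X 0 x\<bar> then \<bar>X 0 x\<bar> else 0) \<longlonglongrightarrow> 0"
      proof (rule AE_I2)
        fix x
        obtain N where N: "\<bar>X 0 x\<bar> < real N" using reals_Archimedean2 by blast
        show "(\<lambda>k. if real k < \<bar>X 0 x\<bar> then \<bar>X 0 x\<bar> else 0) \<longlonglongrightarrow> 0"
          by (rule tendsto_eventually) (use N in \<open>auto simp: eventually_sequentially intro!: exI[of _ N]\<close>)
      qed
    qed auto
    then have "eventually (\<lambda>k. (\<integral>\<omega>. (if real k < \<bar>X 0 \<omega>\<bar> then \<bar>X 0 \<omega>\<bar> else 0) \<partial>M) < t0) sequentially"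
      using t0 by (intro order_tendstoD(2)) auto
    then obtain k where tk: "(\<integral>\<omega>. (if real k < \<bar>X 0 \<omega>\<bar> then \<bar>X 0 \<omega>\<bar> else 0) \<partial>M) < t0"
      by (auto simp: eventually_sequentially)
    define K where "K = real k"
    have K0: "0 \<le> K" by (simp add: K_def)
    define gU where "gU x = (if \<bar>x\<bar> \<le> K then x else 0)" for x :: real
    define gV where "gV x = (if \<bar>x\<bar> \<le> K then 0 else x)" for x :: real
    have mgU[measurable]: "gU \<in> borel_measurable borel" unfolding gU_def by measurable
    have mgV[measurable]: "gV \<in> borel_measurable borel" unfolding gV_def by measurable
    have gUb: "\<bar>gU x\<bar> \<le> K" for x by (simp add: gU_def K_def)
    have gUl: "-K \<le> gU x" and gUu: "gU x \<le> K" for x using gUb[of x] by linarith+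
    have gsplit: "x = gU x + gV x" for x by (simp add: gU_def gV_def)
    have intU: "integrable M (\<lambda>\<omega>. gU (X i \<omega>))" for i
      by (rule integrable_const_bound[where B=K]) (auto simp: gUb)
    have intV0: "integrable M (\<lambda>\<omega>. gV (X 0 \<omega>))"
    proof -
      have "integrable M (\<lambda>\<omega>. X 0 \<omega> - gU (X 0 \<omega>))" using int0 intU by auto
      moreover have "(\<lambda>\<omega>. X 0 \<omega> - gU (X 0 \<omega>)) = (\<lambda>\<omega>. gV (X 0 \<omega>))"
        by (rule ext) (metis gsplit add_diff_cancel_left')
      ultimately show ?thesis by simp
    qed
    have intAV: "integrable M (\<lambda>\<omega>. \<bar>gV (X i \<omega>)\<bar>)" for i
      by (rule transI) (use intV0 in auto)
    define \<mu>K where "\<mu>K = (\<integral>\<omega>. gU (X 0 \<omega>) \<partial>M)"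
    define EV where "EV = (\<integral>\<omega>. gV (X 0 \<omega>) \<partial>M)"
    define tail where "tail = (\<integral>\<omega>. \<bar>gV (X 0 \<omega>)\<bar> \<partial>M)"
    have tail_eq: "tail = (\<integral>\<omega>. (if real k < \<bar>X 0 \<omega>\<bar> then \<bar>X 0 \<omega>\<bar> else 0) \<partial>M)"
      unfolding tail_def by (intro Bochner_Integration.integral_cong) (auto simp: gV_def K_def)
    have tail_lt: "tail < t0" using tk tail_eq by simp
    have EAV: "(\<integral>\<omega>. \<bar>gV (X i \<omega>)\<bar> \<partial>M) = tail" for i
      unfolding tail_def by (rule transE) measurable
    have EVb: "\<bar>EV\<bar> < t0" using integral_abs_bound[of M "\<lambda>\<omega>. gV (X 0 \<omega>)"] tail_lt
      unfolding EV_def tail_def by linarith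
    have mu_split: "\<mu> = \<mu>K + EV"
    proof -
      have "\<mu> = (\<integral>\<omega>. gU (X 0 \<omega>) + gV (X 0 \<omega>) \<partial>M)"
        unfolding \<mu>_def by (rule Bochner_Integration.integral_cong) (auto intro: gsplit)
      also have "\<dots> = \<mu>K + EV" unfolding \<mu>K_def EV_def using intU intV0 by simp
      finally show ?thesis .
    qed
    have muKb: "\<bar>\<mu>K\<bar> \<le> K"
    proof -
      have "\<mu>K \<le> (\<integral>\<omega>. K \<partial>M)" unfolding \<mu>K_def
        by (rule integral_mono) (use intU in \<open>auto intro: gUu\<close>)
      moreover have "(\<integral>\<omega>. -K \<partial>M) \<le> \<mu>K" unfolding \<mu>K_def
        by (rule integral_mono) (use intU in \<open>auto intro: gUl\<close>)
      ultimately show ?thesis by (simp add: prob_space abs_le_iff)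
    qed
    define W where "W i \<omega> = gU (X i \<omega>) - \<mu>K" for i \<omega>
    have indW: "indep_vars (\<lambda>_. borel) W UNIV"
      unfolding W_def by (rule indep_vars_compose2[OF ind, where Y="\<lambda>_ x. gU x - \<mu>K"]) measurable
    have bndW: "\<bar>W i \<omega>\<bar> \<le> 2 * K" for i \<omega>
      using gUb[of "X i \<omega>"] muKb unfolding W_def by linarith
    have zW: "(\<integral>\<omega>. W i \<omega> \<partial>M) = 0" for i
    proof -
      have "(\<integral>\<omega>. W i \<omega> \<partial>M) = (\<integral>\<omega>. gU (X i \<omega>) \<partial>M) - \<mu>K"
        unfolding W_def using intU by (simp add: prob_space)
      also have "\<dots> = 0" unfolding \<mu>K_def by (subst transE) auto
      finally show ?thesis .
    qed
    have K2: "0 \<le> 2 * K" using K0 by simp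
    note SQ = sq_sum_indep[OF indW bndW K2 zW]
    obtain N0 :: nat where N0: "72 * K\<^sup>2 / (e\<^sup>2 * r) < real N0" using reals_Archimedean2 by blast
    define N where "N = max N0 1"
    show "\<exists>no. \<forall>n\<ge>no. norm (prob {\<omega> \<in> space M. e < \<bar>(\<Sum>i<n. X i \<omega>) / real n - \<mu>\<bar>} - 0) < r"
    proof (intro exI allI impI)
      fix n assume nN: "N \<le> n"
      have n0: "0 < n" using nN by (simp add: N_def)
      have nN0: "72 * K\<^sup>2 / (e\<^sup>2 * r) < real n" using N0 nN by (simp add: N_def)
      define A1 where "A1 = {\<omega> \<in> space M. (e/3)\<^sup>2 \<le> ((\<Sum>i<n. W i \<omega>) / real n)\<^sup>2}"
      define A2 where "A2 = {\<omega> \<in> space M. e/3 \<le> (\<Sum>i<n. \<bar>gV (X i \<omega>)\<bar>) / real n}"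
      have A1m: "A1 \<in> events" unfolding A1_def W_def by measurable
      have A2m: "A2 \<in> events" unfolding A2_def by measurable
      have sub: "{\<omega> \<in> space M. e < \<bar>(\<Sum>i<n. X i \<omega>) / real n - \<mu>\<bar>} \<subseteq> A1 \<union> A2"
      proof safe
        fix \<omega> assume w: "\<omega> \<in> space M" "e < \<bar>(\<Sum>i<n. X i \<omega>) / real n - \<mu>\<bar>" "\<omega> \<notin> A2"
        have dec: "(\<Sum>i<n. X i \<omega>) / real n - \<mu> = (\<Sum>i<n. W i \<omega>) / real n + (\<Sum>i<n. gV (X i \<omega>)) / real n - EV"
        proof -
          have "(\<Sum>i<n. X i \<omega>) = (\<Sum>i<n. W i \<omega>) + real n * \<mu>K + (\<Sum>i<n. gV (X i \<omega>))"
            unfolding W_def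
            by (subst gsplit) (simp add: sum.distrib sum_subtractf)
          then show ?thesis using n0 mu_split by (simp add: field_simps)
        qed
        have sa: "\<bar>(\<Sum>i<n. gV (X i \<omega>))\<bar> \<le> (\<Sum>i<n. \<bar>gV (X i \<omega>)\<bar>)" by (rule sum_abs)
        have "\<not> e * real n \<le> 3 * (\<Sum>i<n. \<bar>gV (X i \<omega>)\<bar>)"
          using w(3) w(1) n0 unfolding A2_def by (simp add: field_simps)
        then have "3 * \<bar>(\<Sum>i<n. gV (X i \<omega>))\<bar> < e * real n" using sa by linarith
        then have v: "\<bar>(\<Sum>i<n. gV (X i \<omega>)) / real n\<bar> < e/3"
          using n0 by (simp add: field_simps)
        have "e/3 \<le> \<bar>(\<Sum>i<n. W i \<omega>) / real n\<bar>"
          using w(2) dec v EVb t0 by linarith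
        then have "(e/3)\<^sup>2 \<le> ((\<Sum>i<n. W i \<omega>) / real n)\<^sup>2"
          using e by (metis abs_ge_zero less_eq_real_def power2_abs power_mono zero_less_divide_iff zero_less_numeral)
        then show "\<omega> \<in> A1" unfolding A1_def using w(1) by simp
      qed
      have p1: "prob A1 \<le> 36 * K\<^sup>2 / (real n * e\<^sup>2)"
      proof -
        have "prob A1 \<le> (\<integral>\<omega>. ((\<Sum>i<n. W i \<omega>) / real n)\<^sup>2 \<partial>M) / (e/3)\<^sup>2"
          unfolding A1_def
          by (rule integral_Markov_inequality_measure) (use SQ(1) e in \<open>auto simp: power_divide\<close>)
        also have "(\<integral>\<omega>. ((\<Sum>i<n. W i \<omega>) / real n)\<^sup>2 \<partial>M) = (\<integral>\<omega>. (\<Sum>i<n. W i \<omega>)\<^sup>2 \<partial>M) / (real n)\<^sup>2"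
          by (simp add: power_divide)
        also have "\<dots> \<le> (real n * (2*K)\<^sup>2) / (real n)\<^sup>2"
          using SQ(2)[of n] by (intro divide_right_mono) auto
        finally show ?thesis using n0 e by (simp add: field_simps power2_eq_square)
      qed
      have p2: "prob A2 \<le> tail * 3 / e"
      proof -
        have "prob A2 \<le> (\<integral>\<omega>. (\<Sum>i<n. \<bar>gV (X i \<omega>)\<bar>) / real n \<partial>M) / (e/3)"
          unfolding A2_def
          by (rule integral_Markov_inequality_measure) (use intAV e in auto)
        also have "(\<integral>\<omega>. (\<Sum>i<n. \<bar>gV (X i \<omega>)\<bar>) / real n \<partial>M) = tail"
          using n0 intAV by (simp add: EAV)
        finally show ?thesis by simp
      qed
      have "prob {\<omega> \<in> space M. e < \<bar>(\<Sum>i<n. X i \<omega>) / real n - \<mu>\<bar>} \<le> prob (A1 \<union> A2)"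
        using sub A1m A2m by (intro finite_measure_mono) auto
      also have "\<dots> \<le> prob A1 + prob A2" using A1m A2m by (rule measure_Un_le)
      also have "\<dots> < r/2 + r/2"
      proof (rule add_less_le_mono)
        have "36 * K\<^sup>2 / (real n * e\<^sup>2) < r/2"
          using nN0 e r n0 by (simp add: field_simps)
        then show "prob A1 < r/2" using p1 by linarith
        have "tail * 3 / e < t0 * 3 / e" using tail_lt e by (simp add: divide_strict_right_mono)
        then show "prob A2 \<le> r/2" using p2 t0 by linarith
      qed
      finally show "norm (prob {\<omega> \<in> space M. e < \<bar>(\<Sum>i<n. X i \<omega>) / real n - \<mu>\<bar>} - 0) < r"
        by simp
    qed
  qed
  show ?thesis unfolding conv_in_prob_def \<mu>_def[symmetric] using main by auto
qed



lemma finite_zspace: "finite (zspace L)"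
proof -
  have "inj_on (\<lambda>z. {l. z l}) (zspace L)"
    by (rule inj_onI) (auto simp: zspace_def fun_eq_iff)
  moreover have "(\<lambda>z. {l. z l}) ` zspace L \<subseteq> Pow {..<L}"
    by (auto simp: zspace_def not_le[symmetric])
  ultimately show ?thesis
    by (meson finite_Pow_iff finite_lessThan finite_subset inj_on_finite)
qed

definition fD :: "nat \<Rightarrow> (real \<times> real) \<times> ((nat \<Rightarrow> bool) \<Rightarrow> bool) \<times> (nat \<Rightarrow> bool) \<Rightarrow> real" where
  "fD L u = (\<Sum>z0\<in>zspace L. if snd (snd u) = z0 then (if fst (snd u) z0 then 1 else 0) else 0)"

definition fY :: "nat \<Rightarrow> (real \<times> real) \<times> ((nat \<Rightarrow> bool) \<Rightarrow> bool) \<times> (nat \<Rightarrow> bool) \<Rightarrow> real" where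
  "fY L u = fD L u * snd (fst u) + (1 - fD L u) * fst (fst u)"

definition fZ :: "nat \<Rightarrow> (real \<times> real) \<times> ((nat \<Rightarrow> bool) \<Rightarrow> bool) \<times> (nat \<Rightarrow> bool) \<Rightarrow> real" where
  "fZ l u = (if snd (snd u) l then 1 else 0)"

lemma meas_fD[measurable]: "fD L \<in> borel_measurable unit_space"
proof -
  have a: "(\<lambda>u::(real \<times> real) \<times> ((nat \<Rightarrow> bool) \<Rightarrow> bool) \<times> (nat \<Rightarrow> bool).
     if snd (snd u) = z0 then (if fst (snd u) z0 then 1 else 0) else (0::real)) \<in> borel_measurable unit_space" for z0
  proof -
    have s: "(\<lambda>u::(real \<times> real) \<times> ((nat \<Rightarrow> bool) \<Rightarrow> bool) \<times> (nat \<Rightarrow> bool). snd u) \<in> measurable unit_space (count_space UNIV \<Otimes>\<^sub>M count_space UNIV)"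
      unfolding unit_space_def by measurable
    have g: "(\<lambda>v::((nat \<Rightarrow> bool) \<Rightarrow> bool) \<times> (nat \<Rightarrow> bool). if snd v = z0 then (if fst v z0 then 1 else 0) else (0::real))
       \<in> borel_measurable (count_space UNIV \<Otimes>\<^sub>M count_space UNIV)"
    proof -
      have "(\<lambda>v::((nat \<Rightarrow> bool) \<Rightarrow> bool) \<times> (nat \<Rightarrow> bool). if snd v = z0 then (if fst v z0 then 1 else 0) else (0::real))
         = (\<lambda>v. (\<lambda>d. if d z0 then 1 else 0) (fst v) * (\<lambda>z. if z = z0 then 1 else 0) (snd v))"
        by (auto simp: fun_eq_iff)
      also have "\<dots> \<in> borel_measurable (count_space UNIV \<Otimes>\<^sub>M count_space UNIV)"
        by (intro borel_measurable_times measurable_compose[OF measurable_fst] measurable_compose[OF measurable_snd]) auto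
      finally show ?thesis .
    qed
    show ?thesis using measurable_compose[OF s g] by simp
  qed
  show ?thesis unfolding fD_def by (intro borel_measurable_sum a)
qed

lemma meas_fY[measurable]: "fY L \<in> borel_measurable unit_space"
proof -
  have "(\<lambda>u::(real \<times> real) \<times> ((nat \<Rightarrow> bool) \<Rightarrow> bool) \<times> (nat \<Rightarrow> bool). snd (fst u)) \<in> borel_measurable unit_space"
       "(\<lambda>u::(real \<times> real) \<times> ((nat \<Rightarrow> bool) \<Rightarrow> bool) \<times> (nat \<Rightarrow> bool). fst (fst u)) \<in> borel_measurable unit_space"
    unfolding unit_space_def by measurable
  then show ?thesis unfolding fY_def by measurable
qed

lemma meas_fZ[measurable]: "fZ l \<in> borel_measurable unit_space"
proof -
  have s: "(\<lambda>u::(real \<times> real) \<times> ((nat \<Rightarrow> bool) \<Rightarrow> bool) \<times> (nat \<Rightarrow> bool). snd (snd u)) \<in> measurable unit_space (count_space UNIV)"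
    unfolding unit_space_def by measurable
  have g: "(\<lambda>z::nat \<Rightarrow> bool. if z l then 1 else (0::real)) \<in> borel_measurable (count_space UNIV)" by auto
  show ?thesis using measurable_compose[OF s g] unfolding fZ_def by simp
qed

lemma fD_eq: "Z i \<omega> \<in> zspace L \<Longrightarrow> Dobs Dt Z i \<omega> = fD L (unit_var Y0 Y1 Dt Z i \<omega>)"
  unfolding fD_def Dobs_def unit_var_def fst_conv snd_conv
  by (simp add: sum.delta'[OF finite_zspace])

lemma fY_eq: "Z i \<omega> \<in> zspace L \<Longrightarrow> Yobs Y0 Y1 Dt Z i \<omega> = fY L (unit_var Y0 Y1 Dt Z i \<omega>)"
  unfolding Yobs_def fY_def using fD_eq[of Z i \<omega> L Dt Y0 Y1] by (simp add: unit_var_def)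

lemma fZ_eq: "Zobs Z i \<omega> l = fZ l (unit_var Y0 Y1 Dt Z i \<omega>)"
  unfolding Zobs_def fZ_def unit_var_def by simp



lemma quad_expand:
  fixes a b :: "nat \<Rightarrow> real" and W :: "nat \<Rightarrow> nat \<Rightarrow> real"
  assumes sym: "\<forall>l<L. \<forall>m<L. W l m = W m l"
  shows "(\<Sum>l<L. \<Sum>m<L. (a l - \<beta> * b l) * W l m * (a m - \<beta> * b m)) =
     (\<Sum>l<L. \<Sum>m<L. a l * W l m * a m) - 2 * \<beta> * (\<Sum>l<L. \<Sum>m<L. a l * W l m * b m)
     + \<beta>\<^sup>2 * (\<Sum>l<L. \<Sum>m<L. b l * W l m * b m)"
proof -
  have swap: "(\<Sum>l<L. \<Sum>m<L. b l * W l m * a m) = (\<Sum>l<L. \<Sum>m<L. a l * W l m * b m)"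
  proof -
    have "(\<Sum>l<L. \<Sum>m<L. b l * W l m * a m) = (\<Sum>m<L. \<Sum>l<L. b l * W l m * a m)"
      by (rule sum.swap)
    also have "\<dots> = (\<Sum>m<L. \<Sum>l<L. a m * W m l * b l)"
      using sym by (intro sum.cong refl) (auto simp: mult.commute)
    finally show ?thesis .
  qed
  have e: "(a l - \<beta> * b l) * W l m * (a m - \<beta> * b m) =
      a l * W l m * a m - \<beta> * (a l * W l m * b m) - \<beta> * (b l * W l m * a m) + \<beta>\<^sup>2 * (b l * W l m * b m)" for l m
    by (simp add: algebra_simps power2_eq_square)
  have "(\<Sum>l<L. \<Sum>m<L. (a l - \<beta> * b l) * W l m * (a m - \<beta> * b m)) =
    (\<Sum>l<L. \<Sum>m<L. a l * W l m * a m) - \<beta> * (\<Sum>l<L. \<Sum>m<L. a l * W l m * b m)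
     - \<beta> * (\<Sum>l<L. \<Sum>m<L. b l * W l m * a m) + \<beta>\<^sup>2 * (\<Sum>l<L. \<Sum>m<L. b l * W l m * b m)"
    by (simp only: e sum.distrib sum_subtractf sum_distrib_left)
  also have "\<dots> = (\<Sum>l<L. \<Sum>m<L. a l * W l m * a m) - 2 * \<beta> * (\<Sum>l<L. \<Sum>m<L. a l * W l m * b m)
     + \<beta>\<^sup>2 * (\<Sum>l<L. \<Sum>m<L. b l * W l m * b m)"
    unfolding swap by simp
  finally show ?thesis .
qed


lemma argmin_quad_pos:
  fixes Q A B :: real
  assumes "0 < B"
  shows "(SOME \<beta>. is_arg_min (\<lambda>\<beta>. Q - 2 * \<beta> * A + \<beta>\<^sup>2 * B) (\<lambda>_. True) \<beta>) = A / B"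
proof (rule some_equality)
  have key: "Q - 2 * \<beta> * A + \<beta>\<^sup>2 * B = (Q - A\<^sup>2 / B) + B * (\<beta> - A / B)\<^sup>2" for \<beta>
    using assms by (simp add: field_simps power2_eq_square)
  show "is_arg_min (\<lambda>\<beta>. Q - 2 * \<beta> * A + \<beta>\<^sup>2 * B) (\<lambda>_. True) (A / B)"
    unfolding is_arg_min_def key using assms by (auto simp: not_less)
  fix \<beta> assume h: "is_arg_min (\<lambda>\<beta>. Q - 2 * \<beta> * A + \<beta>\<^sup>2 * B) (\<lambda>_. True) \<beta>"
  show "\<beta> = A / B"
  proof (rule ccontr)
    assume ne: "\<beta> \<noteq> A / B"
    then have "0 < B * (\<beta> - A / B)\<^sup>2" using assms by simp
    then have "(\<lambda>\<beta>. Q - 2 * \<beta> * A + \<beta>\<^sup>2 * B) (A/B) < (\<lambda>\<beta>. Q - 2 * \<beta> * A + \<beta>\<^sup>2 * B) \<beta>"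
      unfolding key by simp
    with h show False unfolding is_arg_min_def by blast
  qed
qed


lemma argmin_const:
  fixes Q :: real
  shows "(SOME \<beta>. is_arg_min (\<lambda>\<beta>::real. Q) (\<lambda>_. True) \<beta>) = (SOME \<beta>::real. True)"
  unfolding is_arg_min_def by simp


lemma posdef_nonneg:
  assumes "posdef L W"
  shows "0 \<le> (\<Sum>l<L. \<Sum>m<L. x l * W l m * x m)"
proof (cases "\<exists>l<L. x l \<noteq> 0")
  case True then show ?thesis using assms unfolding posdef_def by (simp add: less_imp_le)
next
  case False then show ?thesis by simp
qed


lemma posdef_zero:
  assumes "posdef L W" "(\<Sum>l<L. \<Sum>m<L. x l * W l m * x m) = 0"
  shows "\<forall>l<L. x l = 0"
  using assms unfolding posdef_def by fastforce


lemma gn_split: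
  "gn Y D Zv n \<omega> \<beta> l =
     ((\<Sum>i<n. Y i \<omega> * Zv i \<omega> l) / real n - (\<Sum>i<n. Y i \<omega>) / real n * ((\<Sum>i<n. Zv i \<omega> l) / real n))
     - \<beta> * ((\<Sum>i<n. D i \<omega> * Zv i \<omega> l) / real n - (\<Sum>i<n. D i \<omega>) / real n * ((\<Sum>i<n. Zv i \<omega> l) / real n))"
proof (cases "n = 0")
  case True then show ?thesis by (simp add: gn_def phat_def)
next
  case False
  define p where "p = phat Zv n \<omega> l"
  have p: "(\<Sum>i<n. Zv i \<omega> l) / real n = p" by (simp add: p_def phat_def)
  have "(\<Sum>i<n. (Y i \<omega> - \<beta> * D i \<omega>) * (Zv i \<omega> l - p)) =
       (\<Sum>i<n. Y i \<omega> * Zv i \<omega> l - p * Y i \<omega> - \<beta> * (D i \<omega> * Zv i \<omega> l) + \<beta> * (p * D i \<omega>))"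
    by (rule sum.cong) (auto simp: algebra_simps)
  also have "\<dots> = (\<Sum>i<n. Y i \<omega> * Zv i \<omega> l) - p * (\<Sum>i<n. Y i \<omega>) - \<beta> * (\<Sum>i<n. D i \<omega> * Zv i \<omega> l) + \<beta> * (p * (\<Sum>i<n. D i \<omega>))"
    by (simp only: sum.distrib sum_subtractf sum_distrib_left)
  finally have E: "(\<Sum>i<n. (Y i \<omega> - \<beta> * D i \<omega>) * (Zv i \<omega> l - p)) = \<dots>" .
  define s1 where "s1 = (\<Sum>i<n. Y i \<omega> * Zv i \<omega> l)"
  define s2 where "s2 = (\<Sum>i<n. Y i \<omega>)"
  define s3 where "s3 = (\<Sum>i<n. D i \<omega> * Zv i \<omega> l)"
  define s4 where "s4 = (\<Sum>i<n. D i \<omega>)"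
  have "gn Y D Zv n \<omega> \<beta> l = (s1 - p * s2 - \<beta> * s3 + \<beta> * (p * s4)) / real n"
    unfolding gn_def p_def[symmetric] E s1_def s2_def s3_def s4_def ..
  also have "\<dots> = (s1 / real n - s2 / real n * p) - \<beta> * (s3 / real n - s4 / real n * p)"
    using False by (simp add: field_simps)
  finally show ?thesis unfolding s1_def s2_def s3_def s4_def p .
qed


lemma cov_binary:
  fixes X :: "'a \<Rightarrow> real" and Zv :: "'a \<Rightarrow> nat \<Rightarrow> real"
  assumes P: "prob_space M" and iX: "integrable M X"
    and mZ: "(\<lambda>\<omega>. Zv \<omega> l) \<in> borel_measurable M"
    and bin: "\<And>\<omega>. Zv \<omega> l = 0 \<or> Zv \<omega> l = 1"
    and p0: "0 < pZ M Zv l" and p1: "pZ M Zv l < 1"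
  shows "(\<integral>\<omega>. X \<omega> * Zv \<omega> l \<partial>M) - (\<integral>\<omega>. X \<omega> \<partial>M) * (\<integral>\<omega>. Zv \<omega> l \<partial>M)
       = diffZ M X Zv l * pZ M Zv l * (1 - pZ M Zv l)"
proof -
  interpret prob_space M by (rule P)
  define A1 where "A1 = {\<omega> \<in> space M. Zv \<omega> l = 1}"
  define A0 where "A0 = {\<omega> \<in> space M. Zv \<omega> l = 0}"
  define p where "p = pZ M Zv l"
  have A1m[measurable]: "A1 \<in> events"
  proof -
    have "A1 = (\<lambda>\<omega>. Zv \<omega> l) -` {1} \<inter> space M" unfolding A1_def by auto
    then show ?thesis using measurable_sets[OF mZ, of "{1}"] by simp
  qed
  have A0m[measurable]: "A0 \<in> events"
  proof -
    have "A0 = (\<lambda>\<omega>. Zv \<omega> l) -` {0} \<inter> space M" unfolding A0_def by auto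
    then show ?thesis using measurable_sets[OF mZ, of "{0}"] by simp
  qed
  have pA1: "prob A1 = p" unfolding p_def pZ_def A1_def ..
  have A0c: "A0 = space M - A1" unfolding A0_def A1_def using bin by force
  have pA0: "prob A0 = 1 - p" unfolding A0c using pA1 A1m by (simp add: prob_compl)
  define I1 where "I1 = (\<integral>\<omega>. indicator A1 \<omega> * X \<omega> \<partial>M)"
  define I0 where "I0 = (\<integral>\<omega>. indicator A0 \<omega> * X \<omega> \<partial>M)"
  have i1: "integrable M (\<lambda>\<omega>. indicator A1 \<omega> * X \<omega>)"
    using integrable_mult_indicator[OF A1m iX] by simp
  have i0: "integrable M (\<lambda>\<omega>. indicator A0 \<omega> * X \<omega>)"
    using integrable_mult_indicator[OF A0m iX] by simp
  have "(\<integral>\<omega>. X \<omega> * Zv \<omega> l \<partial>M) = I1"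
    unfolding I1_def using bin by (intro Bochner_Integration.integral_cong) (auto simp: A1_def indicator_def)
  moreover have "(\<integral>\<omega>. X \<omega> \<partial>M) = I1 + I0"
  proof -
    have "(\<integral>\<omega>. X \<omega> \<partial>M) = (\<integral>\<omega>. indicator A1 \<omega> * X \<omega> + indicator A0 \<omega> * X \<omega> \<partial>M)"
      using bin by (intro Bochner_Integration.integral_cong) (auto simp: A1_def A0_def indicator_def)
    then show ?thesis unfolding I1_def I0_def using i1 i0 by simp
  qed
  moreover have "(\<integral>\<omega>. Zv \<omega> l \<partial>M) = p"
  proof -
    have "(\<integral>\<omega>. Zv \<omega> l \<partial>M) = (\<integral>\<omega>. indicator A1 \<omega> \<partial>M)"
      using bin by (intro Bochner_Integration.integral_cong) (auto simp: A1_def indicator_def)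
    then show ?thesis using pA1 by simp
  qed
  moreover have "diffZ M X Zv l = I1 / p - I0 / (1 - p)"
    unfolding diffZ_def cond_mean_def I1_def I0_def A1_def[symmetric] A0_def[symmetric] pA1 pA0 ..
  ultimately show ?thesis
    using p0 p1 unfolding p_def[symmetric] by (simp add: field_simps)
qed


lemma p_lt_1:
  fixes Zv :: "'a \<Rightarrow> nat \<Rightarrow> real"
  assumes P: "prob_space M" and pd: "posdef L (covZ M Zv)" and lL: "l < L"
    and mZ: "(\<lambda>\<omega>. Zv \<omega> l) \<in> borel_measurable M"
    and bin: "\<And>\<omega>. Zv \<omega> l = 0 \<or> Zv \<omega> l = 1"
  shows "pZ M Zv l < 1"
proof -
  interpret prob_space M by (rule P)
  define x where "x k = (if k = l then 1 else (0::real))" for k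
  have ex: "\<exists>k<L. x k \<noteq> 0" using lL by (intro exI[of _ l]) (simp add: x_def)
  have pos: "0 < (\<Sum>k<L. \<Sum>m<L. x k * covZ M Zv k m * x m)"
    using pd ex unfolding posdef_def by blast
  have xx: "\<And>k m. x k * covZ M Zv k m * x m = (if m = l then (if k = l then covZ M Zv l l else 0) else 0)"
    by (simp add: x_def)
  have "(\<Sum>k<L. \<Sum>m<L. x k * covZ M Zv k m * x m) = covZ M Zv l l"
    unfolding xx using lL by (simp add: sum.delta)
  with pos have c: "0 < covZ M Zv l l" by simp
  define A1 where "A1 = {\<omega> \<in> space M. Zv \<omega> l = 1}"
  have A1m[measurable]: "A1 \<in> events"
  proof -
    have "A1 = (\<lambda>\<omega>. Zv \<omega> l) -` {1} \<inter> space M" unfolding A1_def by auto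
    then show ?thesis using measurable_sets[OF mZ, of "{1}"] by simp
  qed
  have sA: "A1 \<inter> space M = A1" unfolding A1_def by auto
  have pA1: "prob A1 = pZ M Zv l" unfolding A1_def pZ_def ..
  have "(\<integral>\<omega>. Zv \<omega> l \<partial>M) = (\<integral>\<omega>. indicator A1 \<omega> \<partial>M)"
    using bin by (intro Bochner_Integration.integral_cong) (auto simp: A1_def indicator_def)
  then have e1: "(\<integral>\<omega>. Zv \<omega> l \<partial>M) = pZ M Zv l" using A1m sA by (simp add: pA1)
  have "(\<integral>\<omega>. Zv \<omega> l * Zv \<omega> l \<partial>M) = (\<integral>\<omega>. indicator A1 \<omega> \<partial>M)"
    using bin by (intro Bochner_Integration.integral_cong) (auto simp: A1_def indicator_def)
  then have e2: "(\<integral>\<omega>. Zv \<omega> l * Zv \<omega> l \<partial>M) = pZ M Zv l" using A1m sA by (simp add: pA1)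
  have "0 < pZ M Zv l - pZ M Zv l * pZ M Zv l" using c unfolding covZ_def e1 e2 .
  moreover have "0 \<le> pZ M Zv l" unfolding pZ_def by simp
  ultimately show ?thesis
  proof -
    assume a: "0 < pZ M Zv l - pZ M Zv l * pZ M Zv l" and b: "0 \<le> pZ M Zv l"
    show ?thesis
    proof (rule ccontr)
      assume "\<not> pZ M Zv l < 1"
      then have "pZ M Zv l * 1 \<le> pZ M Zv l * pZ M Zv l" using b by (intro mult_left_mono) auto
      then show False using a by simp
    qed
  qed
qed





theorem proposition3:
  fixes M :: "'a measure" and L :: nat
    and Y0 Y1 :: "nat \<Rightarrow> 'a \<Rightarrow> real"
    and Dt :: "nat \<Rightarrow> 'a \<Rightarrow> (nat \<Rightarrow> bool) \<Rightarrow> bool"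
    and Z :: "nat \<Rightarrow> 'a \<Rightarrow> nat \<Rightarrow> bool"
    and W :: "nat \<Rightarrow> nat \<Rightarrow> real"
  assumes P: "prob_space M"
    and L2: "L \<ge> 2"
    and Zsupp: "\<forall>i \<omega>. Z i \<omega> \<in> zspace L"
    and Dtsupp: "\<forall>i \<omega> z. z \<notin> zspace L \<longrightarrow> \<not> Dt i \<omega> z"
    and iid_indep: "prob_space.indep_vars M (\<lambda>_. unit_space) (unit_var Y0 Y1 Dt Z) UNIV"
    and iid_ident: "\<forall>i. distr M unit_space (unit_var Y0 Y1 Dt Z i)
                       = distr M unit_space (unit_var Y0 Y1 Dt Z 0)"
    and intY: "integrable M (Yobs Y0 Y1 Dt Z 0)"
    and A1: "\<forall>i. indep_rv M ((borel \<Otimes>\<^sub>M borel) \<Otimes>\<^sub>M count_space UNIV)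
                   (\<lambda>\<omega>. ((Y0 i \<omega>, Y1 i \<omega>), Dt i \<omega>)) (count_space UNIV) (Z i)"
    and A2: "\<forall>i \<omega> z z'. z \<in> zspace L \<longrightarrow> z' \<in> zspace L \<longrightarrow> (\<forall>l. z l \<longrightarrow> z' l)
                \<longrightarrow> Dt i \<omega> z \<longrightarrow> Dt i \<omega> z'"
    and A3p: "\<forall>l<L. 0 < pZ M (Zobs Z 0) l"
    and A3pi: "\<forall>l<L. 0 < piZ M (Dobs Dt Z 0) (Zobs Z 0) l"
    and A3S: "posdef L (covZ M (Zobs Z 0))"
    and Wpd: "posdef L W"
  shows "conv_in_prob M (gmm_est L W (Yobs Y0 Y1 Dt Z) (Dobs Dt Z) (Zobs Z))
           (beta_star L W (gammaZ M (Dobs Dt Z 0) (Zobs Z 0))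
                          (wald M (Yobs Y0 Y1 Dt Z 0) (Dobs Dt Z 0) (Zobs Z 0)))
       \<and> (\<Sum>l<L. lam L W (gammaZ M (Dobs Dt Z 0) (Zobs Z 0)) l) = 1"
proof -
  interpret prob_space M by (rule P)
  define U where "U = unit_var Y0 Y1 Dt Z"
  define Yv where "Yv = Yobs Y0 Y1 Dt Z"
  define Dv where "Dv = Dobs Dt Z"
  define Zv where "Zv = Zobs Z"
  have mU[measurable]: "U i \<in> measurable M unit_space" for i
    using iid_indep unfolding indep_vars_def U_def by auto
  have Yv_eq: "Yv i \<omega> = fY L (U i \<omega>)" for i \<omega>
    using fY_eq[of Z i \<omega> L Y0 Y1 Dt] Zsupp unfolding Yv_def U_def by auto
  have Dv_eq: "Dv i \<omega> = fD L (U i \<omega>)" for i \<omega>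
    using fD_eq[of Z i \<omega> L Dt Y0 Y1] Zsupp unfolding Dv_def U_def by auto
  have Zv_eq: "Zv i \<omega> l = fZ l (U i \<omega>)" for i \<omega> l
    using fZ_eq[of Z i \<omega> l Y0 Y1 Dt] unfolding Zv_def U_def by auto
  have Yfun: "Yv i = (\<lambda>\<omega>. fY L (U i \<omega>))" for i by (rule ext) (rule Yv_eq)
  have Dfun: "Dv i = (\<lambda>\<omega>. fD L (U i \<omega>))" for i by (rule ext) (rule Dv_eq)
  have mY[measurable]: "Yv i \<in> borel_measurable M" for i
  proof -
    have "Yv i = (\<lambda>\<omega>. fY L (U i \<omega>))" by (rule ext) (rule Yv_eq)
    then show ?thesis using measurable_compose[OF mU meas_fY] by simp
  qed
  have mD[measurable]: "Dv i \<in> borel_measurable M" for i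
  proof -
    have "Dv i = (\<lambda>\<omega>. fD L (U i \<omega>))" by (rule ext) (rule Dv_eq)
    then show ?thesis using measurable_compose[OF mU meas_fD] by simp
  qed
  have mZ[measurable]: "(\<lambda>\<omega>. Zv i \<omega> l) \<in> borel_measurable M" for i l
  proof -
    have "(\<lambda>\<omega>. Zv i \<omega> l) = (\<lambda>\<omega>. fZ l (U i \<omega>))" by (rule ext) (rule Zv_eq)
    then show ?thesis using measurable_compose[OF mU meas_fZ] by simp
  qed
  have binD: "Dv i \<omega> = 0 \<or> Dv i \<omega> = 1" for i \<omega> by (simp add: Dv_def Dobs_def)
  have binZ: "Zv i \<omega> l = 0 \<or> Zv i \<omega> l = 1" for i \<omega> l by (simp add: Zv_def Zobs_def)
  have bD: "\<bar>Dv i \<omega>\<bar> \<le> 1" for i \<omega> using binD[of i \<omega>] by auto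
  have bZ: "\<bar>Zv i \<omega> l\<bar> \<le> 1" for i \<omega> l using binZ[of i \<omega> l] by auto
  have LLN: "conv_in_prob M (\<lambda>n \<omega>. (\<Sum>i<n. h (U i \<omega>)) / real n) (\<integral>\<omega>. h (U 0 \<omega>) \<partial>M)"
    if hm: "h \<in> borel_measurable unit_space" and hi: "integrable M (\<lambda>\<omega>. h (U 0 \<omega>))" for h
  proof -
    have ind: "indep_vars (\<lambda>_. borel) (\<lambda>i \<omega>. h (U i \<omega>)) UNIV"
      using indep_vars_compose2[OF iid_indep[folded U_def], of "\<lambda>_. h" "\<lambda>_. borel"] hm by auto
    have dis: "distr M borel (\<lambda>\<omega>. h (U i \<omega>)) = distr M borel (\<lambda>\<omega>. h (U 0 \<omega>))" for i
    proof -
      have "distr M borel (\<lambda>\<omega>. h (U i \<omega>)) = distr (distr M unit_space (U i)) borel h"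
        using distr_distr[OF hm mU[of i]] by (simp add: comp_def)
      also have "\<dots> = distr (distr M unit_space (U 0)) borel h"
        using iid_ident[rule_format, of i] unfolding U_def by (rule arg_cong)
      also have "\<dots> = distr M borel (\<lambda>\<omega>. h (U 0 \<omega>))"
        using distr_distr[OF hm mU[of 0]] by (simp add: comp_def)
      finally show ?thesis .
    qed
    show ?thesis using wlln[of "\<lambda>i \<omega>. h (U i \<omega>)", OF ind dis hi] by simp
  qed
  have iY: "integrable M (Yv 0)" using intY unfolding Yv_def .
  have iD: "integrable M (Dv 0)"
    by (rule integrable_const_bound[where B=1]) (auto simp: bD)
  have iZ: "integrable M (\<lambda>\<omega>. Zv 0 \<omega> l)" for l
    by (rule integrable_const_bound[where B=1]) (auto simp: bZ)
  have iDZ: "integrable M (\<lambda>\<omega>. Dv 0 \<omega> * Zv 0 \<omega> l)" for l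
  proof (rule integrable_const_bound[where B=1])
    show "AE x in M. norm (Dv 0 x * Zv 0 x l) \<le> 1"
      using bD bZ by (auto simp: abs_mult intro!: mult_le_one)
  qed auto
  have iYZ: "integrable M (\<lambda>\<omega>. Yv 0 \<omega> * Zv 0 \<omega> l)" for l
  proof (rule Bochner_Integration.integrable_bound[OF iY])
    show "AE x in M. norm (Yv 0 x * Zv 0 x l) \<le> norm (Yv 0 x)"
      using bZ by (auto simp: abs_mult intro!: mult_left_le)
  qed auto
  have cY: "conv_in_prob M (\<lambda>n \<omega>. (\<Sum>i<n. Yv i \<omega>) / real n) (\<integral>\<omega>. Yv 0 \<omega> \<partial>M)"
    unfolding Yv_eq by (rule LLN) (use iY[unfolded Yfun] in auto)
  have cD: "conv_in_prob M (\<lambda>n \<omega>. (\<Sum>i<n. Dv i \<omega>) / real n) (\<integral>\<omega>. Dv 0 \<omega> \<partial>M)"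
    unfolding Dv_eq by (rule LLN) (use iD[unfolded Dfun] in auto)
  have cZ: "conv_in_prob M (\<lambda>n \<omega>. (\<Sum>i<n. Zv i \<omega> l) / real n) (\<integral>\<omega>. Zv 0 \<omega> l \<partial>M)" for l
    unfolding Zv_eq by (rule LLN) (use iZ[of l, unfolded Zv_eq] in auto)
  have cYZ: "conv_in_prob M (\<lambda>n \<omega>. (\<Sum>i<n. Yv i \<omega> * Zv i \<omega> l) / real n) (\<integral>\<omega>. Yv 0 \<omega> * Zv 0 \<omega> l \<partial>M)" for l
  proof -
    have "conv_in_prob M (\<lambda>n \<omega>. (\<Sum>i<n. (\<lambda>u. fY L u * fZ l u) (U i \<omega>)) / real n) (\<integral>\<omega>. (\<lambda>u. fY L u * fZ l u) (U 0 \<omega>) \<partial>M)"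
      by (rule LLN) (use iYZ[of l, unfolded Yv_eq Zv_eq] in auto)
    then show ?thesis unfolding Yv_eq Zv_eq by simp
  qed
  have cDZ: "conv_in_prob M (\<lambda>n \<omega>. (\<Sum>i<n. Dv i \<omega> * Zv i \<omega> l) / real n) (\<integral>\<omega>. Dv 0 \<omega> * Zv 0 \<omega> l \<partial>M)" for l
  proof -
    have "conv_in_prob M (\<lambda>n \<omega>. (\<Sum>i<n. (\<lambda>u. fD L u * fZ l u) (U i \<omega>)) / real n) (\<integral>\<omega>. (\<lambda>u. fD L u * fZ l u) (U 0 \<omega>) \<partial>M)"
      by (rule LLN) (use iDZ[of l, unfolded Dv_eq Zv_eq] in auto)
    then show ?thesis unfolding Dv_eq Zv_eq by simp
  qed
  define a where "a = (\<lambda>n \<omega> l. (\<Sum>i<n. Yv i \<omega> * Zv i \<omega> l) / real n - (\<Sum>i<n. Yv i \<omega>) / real n * ((\<Sum>i<n. Zv i \<omega> l) / real n))"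
  define b where "b = (\<lambda>n \<omega> l. (\<Sum>i<n. Dv i \<omega> * Zv i \<omega> l) / real n - (\<Sum>i<n. Dv i \<omega>) / real n * ((\<Sum>i<n. Zv i \<omega> l) / real n))"
  define c where "c = (\<lambda>l. (\<integral>\<omega>. Yv 0 \<omega> * Zv 0 \<omega> l \<partial>M) - (\<integral>\<omega>. Yv 0 \<omega> \<partial>M) * (\<integral>\<omega>. Zv 0 \<omega> l \<partial>M))"
  define G where "G = gammaZ M (Dv 0) (Zv 0)"
  have ca: "conv_in_prob M (\<lambda>n \<omega>. a n \<omega> l) (c l)" for l
    unfolding a_def c_def by (intro conv_diff[OF P] conv_mult[OF P] cYZ cY cZ)
  have pl: "0 < pZ M (Zv 0) l" if "l < L" for l using A3p that unfolding Zv_def by auto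
  have pu: "pZ M (Zv 0) l < 1" if "l < L" for l
    by (rule p_lt_1[OF P A3S[folded Zv_def] that mZ binZ])
  have c_eq: "c l = rhoZ M (Yv 0) (Zv 0) l * pZ M (Zv 0) l * (1 - pZ M (Zv 0) l)" if "l < L" for l
    unfolding c_def rhoZ_def by (rule cov_binary[OF P iY mZ binZ pl[OF that] pu[OF that]])
  have G_eq: "G l = (\<integral>\<omega>. Dv 0 \<omega> * Zv 0 \<omega> l \<partial>M) - (\<integral>\<omega>. Dv 0 \<omega> \<partial>M) * (\<integral>\<omega>. Zv 0 \<omega> l \<partial>M)" if "l < L" for l
    unfolding G_def gammaZ_def piZ_def by (rule cov_binary[OF P iD mZ binZ pl[OF that] pu[OF that], symmetric])
  have Gpos: "0 < G l" if "l < L" for l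
  proof -
    have "0 < piZ M (Dv 0) (Zv 0) l" using A3pi that unfolding Dv_def Zv_def by auto
    then show ?thesis unfolding G_def gammaZ_def using pl[OF that] pu[OF that] by simp
  qed
  have cb: "conv_in_prob M (\<lambda>n \<omega>. b n \<omega> l) (G l)" if "l < L" for l
    unfolding b_def G_eq[OF that] by (intro conv_diff[OF P] conv_mult[OF P] cDZ cD cZ)
  define A where "A = (\<lambda>n \<omega>. \<Sum>l<L. \<Sum>m<L. a n \<omega> l * W l m * b n \<omega> m)"
  define B where "B = (\<lambda>n \<omega>. \<Sum>l<L. \<Sum>m<L. b n \<omega> l * W l m * b n \<omega> m)"
  define Q where "Q = (\<lambda>n \<omega>. \<Sum>l<L. \<Sum>m<L. a n \<omega> l * W l m * a n \<omega> m)"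
  define As where "As = (\<Sum>l<L. \<Sum>m<L. c l * W l m * G m)"
  define Bs where "Bs = (\<Sum>l<L. \<Sum>m<L. G l * W l m * G m)"
  have cA: "conv_in_prob M A As"
    unfolding A_def As_def by (intro conv_sum[OF P] conv_wmult[OF P] ca cb) auto
  have cB: "conv_in_prob M B Bs"
    unfolding B_def Bs_def by (intro conv_sum[OF P] conv_wmult[OF P] cb) auto
  have L0: "0 < L" using L2 by simp
  have Bpos: "0 < Bs"
  proof -
    have "G 0 \<noteq> 0" using Gpos[OF L0] by simp
    then have "\<exists>l<L. G l \<noteq> 0" using L0 by blast
    then show ?thesis using Wpd unfolding posdef_def Bs_def by blast
  qed
  have sym: "\<forall>l<L. \<forall>m<L. W l m = W m l" using Wpd unfolding posdef_def by blast
  have gn_ab: "gn Yv Dv Zv n \<omega> \<beta> l = a n \<omega> l - \<beta> * b n \<omega> l" for n \<omega> \<beta> l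
    unfolding gn_split a_def b_def by simp
  have est: "gmm_est L W Yv Dv Zv n \<omega> = (if 0 < B n \<omega> then A n \<omega> / B n \<omega> else (SOME \<beta>::real. True))" for n \<omega>
  proof -
    have obj: "gmm_obj L W Yv Dv Zv n \<omega> = (\<lambda>\<beta>. Q n \<omega> - 2 * \<beta> * A n \<omega> + \<beta>\<^sup>2 * B n \<omega>)"
    proof (rule ext)
      fix \<beta>
      show "gmm_obj L W Yv Dv Zv n \<omega> \<beta> = Q n \<omega> - 2 * \<beta> * A n \<omega> + \<beta>\<^sup>2 * B n \<omega>"
        unfolding gmm_obj_def gn_ab quad_expand[OF sym] Q_def A_def B_def by simp
    qed
    show ?thesis
    proof (cases "0 < B n \<omega>")
      case True
      then show ?thesis unfolding gmm_est_def obj using argmin_quad_pos[OF True] by simp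
    next
      case False
      have "0 \<le> B n \<omega>" unfolding B_def by (rule posdef_nonneg[OF Wpd])
      with False have B0: "B n \<omega> = 0" by simp
      then have bz: "\<forall>l<L. b n \<omega> l = 0" using posdef_zero[OF Wpd, of "b n \<omega>"] unfolding B_def by simp
      have A0: "A n \<omega> = 0" unfolding A_def using bz by simp
      show ?thesis unfolding gmm_est_def obj A0 B0 using argmin_const[of "Q n \<omega>"] by simp
    qed
  qed
  have estf: "gmm_est L W Yv Dv Zv = (\<lambda>n \<omega>. if 0 < B n \<omega> then A n \<omega> / B n \<omega> else (SOME \<beta>::real. True))"
    by (intro ext) (rule est)
  have conv: "conv_in_prob M (gmm_est L W Yv Dv Zv) (As / Bs)"
    unfolding estf by (rule conv_div_if[OF P cA cB Bpos])
  have inner: "(\<Sum>l<L. G l * (\<Sum>m<L. W l m * G m)) = Bs"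
    unfolding Bs_def by (simp add: sum_distrib_left mult.assoc)
  have lamsum: "(\<Sum>l<L. lam L W G l) = 1"
  proof -
    have "(\<Sum>l<L. lam L W G l) = (\<Sum>l<L. G l * (\<Sum>m<L. W l m * G m)) / Bs"
      unfolding lam_def Bs_def by (simp add: sum_divide_distrib)
    then show ?thesis using inner Bpos by simp
  qed
  have bstar: "beta_star L W G (wald M (Yv 0) (Dv 0) (Zv 0)) = As / Bs"
  proof -
    have t: "lam L W G l * wald M (Yv 0) (Dv 0) (Zv 0) l = c l * (\<Sum>m<L. W l m * G m) / Bs" if "l < L" for l
    proof -
      have pi0: "piZ M (Dv 0) (Zv 0) l \<noteq> 0" using A3pi that unfolding Dv_def Zv_def by auto
      have Gl: "G l = piZ M (Dv 0) (Zv 0) l * pZ M (Zv 0) l * (1 - pZ M (Zv 0) l)"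
        unfolding G_def gammaZ_def ..
      define S where "S = (\<Sum>m<L. W l m * G m)"
      have "lam L W G l * wald M (Yv 0) (Dv 0) (Zv 0) l = G l * S / Bs * (rhoZ M (Yv 0) (Zv 0) l / piZ M (Dv 0) (Zv 0) l)"
        unfolding lam_def wald_def Bs_def S_def ..
      also have "\<dots> = c l * S / Bs"
        unfolding Gl c_eq[OF that] using pi0 Bpos by (simp add: field_simps)
      finally show ?thesis unfolding S_def .
    qed
    have "beta_star L W G (wald M (Yv 0) (Dv 0) (Zv 0)) = (\<Sum>l<L. c l * (\<Sum>m<L. W l m * G m) / Bs)"
      unfolding beta_star_def using t by (intro sum.cong) auto
    also have "\<dots> = As / Bs"
      unfolding As_def by (simp add: sum_divide_distrib sum_distrib_left mult.assoc)
    finally show ?thesis .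
  qed
  show ?thesis
    unfolding Yv_def[symmetric] Dv_def[symmetric] Zv_def[symmetric] G_def[symmetric] bstar
    using conv lamsum by simp
qed


end
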